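(* Let $(X,T)$ be a topological dynamical system and $\mu$ a $T$-invariant Borel probability measure on $X$. Then $\mu$ has bounded complexity with respect to $\{\bar d_n\}$ if and only if $\mu$ has bounded complexity with respect to $\{\hat d_n\}$.
   Context: A t.d.s. $(X,T)$ consists of a compact metric space $(X,d)$ and a continuous map $T\colon X\to X$. Let $\bar d_n(x,y)=\frac1n\sum_{i=0}^{n-1}d(T^ix,T^iy)$ and $\hat d_n(x,y)=\max\{\bar d_k(x,y)\colon1\le k\le n\}$. For $\rho_n\in\{\bar d_n,\hat d_n\}$ let $B_{\rho_n}(x,\varepsilon)=\{y\colon\rho_n(x,y)<\varepsilon\}$ and $\mathrm{span}^{\rho}_\mu(n,\varepsilon)=\min\{\#(F)\colon F\subset X,\ \mu(\bigcup_{x\in F}B_{\rho_n}(x,\varepsilon))>1-\varepsilon\}$. $\mu$ has bounded complexity with respect to $\{\rho_n\}$ if for every $\varepsilon>0$ there is a positive integer $C$ with $\mathrm{span}^{\rho}_\mu(n,\varepsilon)\le C$ for all $n\ge1$. *)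

theory Defs
  imports "HOL-Probability.Probability"
begin

definition dbar :: "('a::metric_space \<Rightarrow> 'a) \<Rightarrow> nat \<Rightarrow> 'a \<Rightarrow> 'a \<Rightarrow> real" where
  "dbar T n x y = (\<Sum>i<n. dist ((T ^^ i) x) ((T ^^ i) y)) / real n"

definition dhat :: "('a::metric_space \<Rightarrow> 'a) \<Rightarrow> nat \<Rightarrow> 'a \<Rightarrow> 'a \<Rightarrow> real" where
  "dhat T n x y = Max ((\<lambda>k. dbar T k x y) ` {1..n})"

definition rball :: "'a set \<Rightarrow> (nat \<Rightarrow> 'a \<Rightarrow> 'a \<Rightarrow> real) \<Rightarrow> nat \<Rightarrow> 'a \<Rightarrow> real \<Rightarrow> 'a set" where
  "rball X \<rho> n x \<epsilon> = {y \<in> X. \<rho> n x y < \<epsilon>}"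

definition span_mu :: "'a set \<Rightarrow> 'a measure \<Rightarrow> (nat \<Rightarrow> 'a \<Rightarrow> 'a \<Rightarrow> real) \<Rightarrow> nat \<Rightarrow> real \<Rightarrow> nat" where
  "span_mu X \<mu> \<rho> n \<epsilon> =
     Inf {card F | F. finite F \<and> F \<subseteq> X \<and> measure \<mu> (\<Union>x\<in>F. rball X \<rho> n x \<epsilon>) > 1 - \<epsilon>}"

definition bounded_complexity :: "'a set \<Rightarrow> 'a measure \<Rightarrow> (nat \<Rightarrow> 'a \<Rightarrow> 'a \<Rightarrow> real) \<Rightarrow> bool" where
  "bounded_complexity X \<mu> \<rho> \<longleftrightarrow>
     (\<forall>\<epsilon>>0. \<exists>C::nat. C > 0 \<and> (\<forall>n\<ge>1. span_mu X \<mu> \<rho> n \<epsilon> \<le> C))"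

end

theory Submission imports Defs begin
definition badset :: "(nat \<Rightarrow> real) \<Rightarrow> real \<Rightarrow> nat \<Rightarrow> nat \<Rightarrow> nat set" where
  "badset a \<epsilon> N m = {i\<in>{m..<N}. \<exists>k\<ge>1. i+k \<le> N \<and> \<epsilon> * k \<le> (\<Sum>j\<in>{i..<i+k}. a j)}"

lemma badset_finite: "finite (badset a \<epsilon> N m)"
  unfolding badset_def by simp

lemma rising_sun_aux:
  fixes a :: "nat \<Rightarrow> real" and \<epsilon> :: real
  assumes nonneg: "\<And>j. a j \<ge> 0" and ep: "\<epsilon> > 0"
  shows "\<epsilon> * card (badset a \<epsilon> N m) \<le> (\<Sum>j\<in>{m..<N}. a j)"
proof (induction "N - m" arbitrary: m rule: less_induct)
  case less
  show ?case
  proof (cases "m < N")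
    case False
    then have "badset a \<epsilon> N m = {}" unfolding badset_def by simp
    then show ?thesis using False by simp
  next
    case True
    show ?thesis
    proof (cases "m \<in> badset a \<epsilon> N m")
      case False
      have eq: "badset a \<epsilon> N m = badset a \<epsilon> N (Suc m)"
      proof (rule set_eqI)
        fix i show "i \<in> badset a \<epsilon> N m \<longleftrightarrow> i \<in> badset a \<epsilon> N (Suc m)"
        proof (cases "i = m")
          case True then show ?thesis using False by (simp add: badset_def)
        next
          case False then show ?thesis unfolding badset_def by auto
        qed
      qed
      have "N - Suc m < N - m" using True by simp
      then have "\<epsilon> * card (badset a \<epsilon> N (Suc m)) \<le> (\<Sum>j\<in>{Suc m..<N}. a j)"
        by (rule less)
      also have "\<dots> \<le> (\<Sum>j\<in>{m..<N}. a j)"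
        using True nonneg by (simp add: sum.atLeast_Suc_lessThan)
      finally show ?thesis using eq by simp
    next
      case True2: True
      then obtain k where k: "k \<ge> 1" "m + k \<le> N" "\<epsilon> * k \<le> (\<Sum>j\<in>{m..<m+k}. a j)"
        unfolding badset_def by auto
      have sub: "badset a \<epsilon> N m \<subseteq> {m..<m+k} \<union> badset a \<epsilon> N (m+k)"
        unfolding badset_def by auto
      have "card (badset a \<epsilon> N m) \<le> card ({m..<m+k} \<union> badset a \<epsilon> N (m+k))"
        by (rule card_mono[OF _ sub]) (simp add: badset_finite)
      also have "\<dots> \<le> card {m..<m+k} + card (badset a \<epsilon> N (m+k))"
        by (rule card_Un_le)
      finally have c: "real (card (badset a \<epsilon> N m)) \<le> real k + real (card (badset a \<epsilon> N (m+k)))"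
        by simp
      have "N - (m+k) < N - m" using k True by simp
      then have IH: "\<epsilon> * card (badset a \<epsilon> N (m+k)) \<le> (\<Sum>j\<in>{m+k..<N}. a j)"
        by (rule less)
      have split: "(\<Sum>j\<in>{m..<N}. a j) = (\<Sum>j\<in>{m..<m+k}. a j) + (\<Sum>j\<in>{m+k..<N}. a j)"
        using k by (simp add: sum.atLeastLessThan_concat)
      have "\<epsilon> * card (badset a \<epsilon> N m) \<le> \<epsilon> * (real k + real (card (badset a \<epsilon> N (m+k))))"
        using c ep by (intro mult_left_mono) auto
      then show ?thesis using IH k split by (simp add: distrib_left)
    qed
  qed
qed

lemma rising_sun:
  fixes a :: "nat \<Rightarrow> real" and \<epsilon> :: real
  assumes nonneg: "\<And>j. a j \<ge> 0" and ep: "\<epsilon> > 0"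
  shows "\<epsilon> * card {i\<in>{m..<N}. \<exists>k\<ge>1. i+k \<le> N \<and> \<epsilon> * k \<le> (\<Sum>j\<in>{i..<i+k}. a j)}
          \<le> (\<Sum>j\<in>{m..<N}. a j)"
  using rising_sun_aux[OF assms] unfolding badset_def .

lemma funpow_cont:
  assumes "T ` X \<subseteq> X" "continuous_on X T"
  shows "continuous_on X (T^^i) \<and> (T^^i) ` X \<subseteq> X"
proof (induction i)
  case 0 then show ?case by (simp add: continuous_on_id)
next
  case (Suc i)
  then have c: "continuous_on X (T^^i)" and s: "(T^^i) ` X \<subseteq> X" by auto
  have "continuous_on X (T \<circ> (T^^i))"
    by (rule continuous_on_compose[OF c]) (rule continuous_on_subset[OF assms(2) s])
  moreover have "(T \<circ> (T^^i)) ` X \<subseteq> X" using s assms(1) by auto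
  ultimately show ?case by simp
qed

lemma dbar_cont:
  assumes "T ` X \<subseteq> X" "continuous_on X T"
  shows "continuous_on X (\<lambda>y. dbar T k x y)"
  unfolding dbar_def divide_inverse
  by (intro continuous_intros continuous_on_dist continuous_on_sum)
     (auto intro: funpow_cont[OF assms, THEN conjunct1])

lemma rball_dbar_open:
  assumes "T ` X \<subseteq> X" "continuous_on X T"
  shows "\<exists>V. open V \<and> rball X (dbar T) k x e = X \<inter> V"
proof -
  obtain A where "open A" "A \<inter> X = (\<lambda>y. dbar T k x y) -` {..<e} \<inter> X"
    using dbar_cont[OF assms, of k x] unfolding continuous_on_open_invariant
    by (meson open_lessThan)
  then show ?thesis unfolding rball_def by (intro exI[of _ A]) auto
qed

lemma dhat_lt_iff:
  assumes "n \<ge> 1"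
  shows "dhat T n x y < e \<longleftrightarrow> (\<forall>k\<in>{1..n}. dbar T k x y < e)"
  using assms unfolding dhat_def by (subst Max_less_iff) auto

lemma rball_dhat_eq:
  assumes "n \<ge> 1"
  shows "rball X (dhat T) n x e = X \<inter> (\<Inter>k\<in>{1..n}. rball X (dbar T) k x e)"
  using assms unfolding rball_def by (auto simp: dhat_lt_iff)

lemma rball_dhat_open:
  assumes "T ` X \<subseteq> X" "continuous_on X T" "n \<ge> 1"
  shows "\<exists>V. open V \<and> rball X (dhat T) n x e = X \<inter> V"
proof -
  have "\<forall>k. \<exists>V. open V \<and> rball X (dbar T) k x e = X \<inter> V"
    using rball_dbar_open[OF assms(1,2)] by blast
  then obtain V where V: "\<And>k. open (V k)" "\<And>k. rball X (dbar T) k x e = X \<inter> V k" by metis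
  have "rball X (dhat T) n x e = X \<inter> (\<Inter>k\<in>{1..n}. V k)"
    unfolding rball_dhat_eq[OF assms(3)] V(2) using assms(3) by auto
  moreover have "open (\<Inter>k\<in>{1..n}. V k)" using V(1) by (intro open_INT) auto
  ultimately show ?thesis by blast
qed

lemma dbar_self: "dbar T k x x = 0" unfolding dbar_def by simp

lemma dhat_self: "n \<ge> 1 \<Longrightarrow> dhat T n x x = 0"
  unfolding dhat_def dbar_self by (subst image_constant) auto

lemma open_in_sets:
  assumes "sets \<mu> = sets (restrict_space borel X)" "open V"
  shows "X \<inter> V \<in> sets \<mu>"
  unfolding assms(1) sets_restrict_space using assms(2) by auto

lemma S_nonempty:
  assumes "compact X" "prob_space \<mu>" "sets \<mu> = sets (restrict_space borel X)" "e > 0"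
    and cent: "\<And>x. x \<in> X \<Longrightarrow> x \<in> rball X \<rho> n x e"
    and opn: "\<And>x. \<exists>V. open V \<and> rball X \<rho> n x e = X \<inter> V"
  shows "\<exists>F. finite F \<and> F \<subseteq> X \<and> measure \<mu> (\<Union>x\<in>F. rball X \<rho> n x e) > 1 - e"
proof -
  obtain V where V: "\<And>x. open (V x)" "\<And>x. rball X \<rho> n x e = X \<inter> V x" using opn by metis
  have "X \<subseteq> (\<Union>x\<in>X. V x)" using cent V(2) by blast
  then obtain F where F: "F \<subseteq> X" "finite F" "X \<subseteq> (\<Union>x\<in>F. V x)"
    using compactE_image[OF assms(1), of X V] V(1) by metis
  have "(\<Union>x\<in>F. rball X \<rho> n x e) = X" using F V(2) by auto
  moreover have "space \<mu> = X"
    using sets_eq_imp_space_eq[OF assms(3)] by (simp add: space_restrict_space)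
  ultimately have "measure \<mu> (\<Union>x\<in>F. rball X \<rho> n x e) = 1"
    using prob_space.prob_space[OF assms(2)] by simp
  then show ?thesis using F assms(4) by (intro exI[of _ F]) auto
qed


lemma span_le:
  assumes "finite F" "F \<subseteq> X" "measure \<mu> (\<Union>x\<in>F. rball X \<rho> n x e) > 1 - e"
  shows "span_mu X \<mu> \<rho> n e \<le> card F"
  unfolding span_mu_def by (rule cInf_lower) (use assms in auto)

lemma span_mem:
  assumes "\<exists>F. finite F \<and> F \<subseteq> X \<and> measure \<mu> (\<Union>x\<in>F. rball X \<rho> n x e) > 1 - e"
  shows "\<exists>F. finite F \<and> F \<subseteq> X \<and> measure \<mu> (\<Union>x\<in>F. rball X \<rho> n x e) > 1 - e
           \<and> card F = span_mu X \<mu> \<rho> n e"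
proof -
  let ?S = "{card F | F. finite F \<and> F \<subseteq> X \<and> measure \<mu> (\<Union>x\<in>F. rball X \<rho> n x e) > 1 - e}"
  have "?S \<noteq> {}" using assms by auto
  then have "Inf ?S \<in> ?S" by (rule Inf_nat_def1)
  then show ?thesis unfolding span_mu_def by auto
qed

lemma funpow_meas:
  assumes "T \<in> measurable \<mu> \<mu>"
  shows "(T^^i) \<in> measurable \<mu> \<mu>"
proof (induction i)
  case 0 then show ?case by (simp add: id_def)
next
  case (Suc i) then show ?case using assms by (simp add: measurable_comp)
qed

lemma funpow_inv:
  assumes "T \<in> measurable \<mu> \<mu>" "distr \<mu> \<mu> T = \<mu>"
  shows "distr \<mu> \<mu> (T^^i) = \<mu>"
proof (induction i)
  case 0 then show ?case by (simp add: id_def)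
next
  case (Suc i)
  have "distr \<mu> \<mu> (T^^Suc i) = distr \<mu> \<mu> (T \<circ> (T^^i))" by simp
  also have "\<dots> = distr (distr \<mu> \<mu> (T^^i)) \<mu> T"
    by (rule distr_distr[symmetric, OF assms(1) funpow_meas[OF assms(1)]])
  also have "\<dots> = \<mu>" using Suc assms(2) by simp
  finally show ?case .
qed

lemma key_lemma:
  fixes X :: "'a::metric_space set" and T :: "'a \<Rightarrow> 'a" and \<mu> :: "'a measure"
  assumes TX: "T ` X \<subseteq> X" and Tc: "continuous_on X T"
    and P: "prob_space \<mu>" and sets: "sets \<mu> = sets (restrict_space borel X)"
    and Tm: "T \<in> measurable \<mu> \<mu>" and Ti: "distr \<mu> \<mu> T = \<mu>"
    and n: "n \<ge> 1" and ep: "0 < \<epsilon>" "\<epsilon> \<le> 1"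
    and F: "finite F" "F \<subseteq> X"
    and U: "measure \<mu> (\<Union>z\<in>F. rball X (dbar T) (2*n) z (\<epsilon>^2/4)) > 1 - \<epsilon>^2/4"
  shows "\<exists>i<n. measure \<mu> (\<Union>z\<in>F. rball X (dhat T) n ((T^^i) z) \<epsilon>) > 1 - \<epsilon>"
proof (rule ccontr)
  interpret P: prob_space \<mu> by (fact P)
  assume "\<not> ?thesis"
  then have le: "\<And>i. i < n \<Longrightarrow> measure \<mu> (\<Union>z\<in>F. rball X (dhat T) n ((T^^i) z) \<epsilon>) \<le> 1 - \<epsilon>"
    using not_less by blast
  define \<delta> where "\<delta> = \<epsilon>^2/4"
  define U where "U = (\<Union>z\<in>F. rball X (dbar T) (2*n) z \<delta>)"
  define W where "W i = (\<Union>z\<in>F. rball X (dhat T) n ((T^^i) z) \<epsilon>)" for i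
  define A where "A i = (T^^i) -` W i \<inter> X" for i
  have spX: "space \<mu> = X" using sets_eq_imp_space_eq[OF sets] by (simp add: space_restrict_space)
  have Wm: "W i \<in> sets \<mu>" for i
    unfolding W_def using F(1)
  proof (intro sets.finite_UN)
    fix z
    obtain V where "open V" "rball X (dhat T) n ((T^^i) z) \<epsilon> = X \<inter> V"
      using rball_dhat_open[OF TX Tc n] by blast
    then show "rball X (dhat T) n ((T^^i) z) \<epsilon> \<in> sets \<mu>" using open_in_sets[OF sets] by simp
  qed auto
  have Um: "U \<in> sets \<mu>"
    unfolding U_def using F(1)
  proof (intro sets.finite_UN)
    fix z
    obtain V where "open V" "rball X (dbar T) (2*n) z \<delta> = X \<inter> V"
      using rball_dbar_open[OF TX Tc] by blast
    then show "rball X (dbar T) (2*n) z \<delta> \<in> sets \<mu>" using open_in_sets[OF sets] by simp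
  qed auto
  have Am: "A i \<in> sets \<mu>" for i
    unfolding A_def using measurable_sets[OF funpow_meas[OF Tm] Wm, of i] spX by simp
  have mA: "measure \<mu> (A i) = measure \<mu> (W i)" for i
  proof -
    have "measure \<mu> (W i) = measure (distr \<mu> \<mu> (T^^i)) (W i)" using funpow_inv[OF Tm Ti] by simp
    also have "\<dots> = measure \<mu> ((T^^i) -` W i \<inter> space \<mu>)"
      by (rule measure_distr[OF funpow_meas[OF Tm] Wm])
    finally show ?thesis unfolding A_def spX by simp
  qed
  have AX: "\<And>i. A i \<inter> X = A i" unfolding A_def by auto
  have UX: "U \<subseteq> X" unfolding U_def rball_def by blast
  have pw: "real n * (1 - \<epsilon>/2) \<le> (\<Sum>i<n. indicator (A i) y)" if yU: "y \<in> U" for y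
  proof -
    obtain z where z: "z \<in> F" "y \<in> X" "dbar T (2*n) z y < \<delta>"
      using yU unfolding U_def rball_def by auto
    define a where "a j = dist ((T^^j) z) ((T^^j) y)" for j
    define Bad where "Bad = {i\<in>{0..<2*n}. \<exists>k\<ge>1. i+k \<le> 2*n \<and> \<epsilon> * k \<le> (\<Sum>j\<in>{i..<i+k}. a j)}"
    have rs: "\<epsilon> * card Bad \<le> (\<Sum>j\<in>{0..<2*n}. a j)"
      unfolding Bad_def by (rule rising_sun) (auto simp: a_def ep)
    have "(\<Sum>j\<in>{0..<2*n}. a j) = real (2*n) * dbar T (2*n) z y"
      using n unfolding dbar_def a_def by (simp add: atLeast0LessThan)
    also have "\<dots> < real (2*n) * \<delta>" using z(3) n by simp
    finally have "\<epsilon> * card Bad < real (2*n) * \<delta>" using rs by linarith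
    also have "real (2*n) * \<delta> = \<epsilon> * (real n * \<epsilon> / 2)" unfolding \<delta>_def by (simp add: power2_eq_square)
    finally have cB: "real (card Bad) < real n * \<epsilon> / 2" using ep by simp
    have sub: "{..<n} - {i. y \<in> A i} \<subseteq> Bad"
    proof
      fix i assume i: "i \<in> {..<n} - {i. y \<in> A i}"
      have Tiy: "(T^^i) y \<in> X" using funpow_cont[OF TX Tc, of i] z(2) by auto
      have "(T^^i) y \<notin> W i" using i z(2) unfolding A_def by auto
      then have "(T^^i) y \<notin> rball X (dhat T) n ((T^^i) z) \<epsilon>" using z(1) unfolding W_def by auto
      then have "\<not> dhat T n ((T^^i) z) ((T^^i) y) < \<epsilon>" using Tiy unfolding rball_def by auto
      then obtain k where k: "k \<in> {1..n}" "\<not> dbar T k ((T^^i) z) ((T^^i) y) < \<epsilon>"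
        using dhat_lt_iff[OF n] by blast
      have "dbar T k ((T^^i) z) ((T^^i) y) = (\<Sum>j<k. a (j+i)) / real k"
        unfolding dbar_def a_def by (simp add: funpow_add)
      also have "(\<Sum>j<k. a (j+i)) = (\<Sum>j\<in>{i..<i+k}. a j)"
        using sum.shift_bounds_nat_ivl[of a 0 i k] by (simp add: atLeast0LessThan add.commute)
      finally have "\<epsilon> * k \<le> (\<Sum>j\<in>{i..<i+k}. a j)"
        using k by (simp add: not_less pos_le_divide_eq mult.commute)
      then show "i \<in> Bad" unfolding Bad_def using i k(1) by auto
    qed
    have "n = card ({..<n} \<inter> {i. y \<in> A i} \<union> ({..<n} - {i. y \<in> A i}))"
      by (metis Int_Diff_Un card_lessThan)
    also have "\<dots> \<le> card ({..<n} \<inter> {i. y \<in> A i}) + card ({..<n} - {i. y \<in> A i})"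
      by (rule card_Un_le)
    also have "card ({..<n} - {i. y \<in> A i}) \<le> card Bad"
      by (rule card_mono[OF _ sub]) (simp add: Bad_def)
    finally have "real n \<le> real (card ({..<n} \<inter> {i. y \<in> A i})) + real (card Bad)" by linarith
    moreover have "(\<Sum>i<n. indicator (A i) y) = real (card ({..<n} \<inter> {i. y \<in> A i}))"
    proof -
      have "(\<Sum>i<n. indicator (A i) y :: real) = (\<Sum>i<n. indicator {i. y \<in> A i} i)"
        by (simp add: indicator_def)
      also have "\<dots> = real (card ({..<n} \<inter> {i. y \<in> A i}))"
        by (simp add: indicator_def sum.If_cases)
      finally show ?thesis .
    qed
    ultimately show ?thesis using cB by (simp add: algebra_simps)
  qed
  have int_ind: "integrable \<mu> (indicator B :: 'a \<Rightarrow> real)" if "B \<in> sets \<mu>" for B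
    by (intro integrable_real_indicator) (auto simp: that less_top[symmetric])
  have "measure \<mu> U * (real n * (1 - \<epsilon>/2)) = (\<integral>y. indicator U y * (real n * (1 - \<epsilon>/2)) \<partial>\<mu>)"
    using UX spX by (simp add: Int_absorb2)
  also have "\<dots> \<le> (\<integral>y. (\<Sum>i<n. indicator (A i) y) \<partial>\<mu>)"
  proof (rule integral_mono)
    show "integrable \<mu> (\<lambda>y. indicator U y * (real n * (1 - \<epsilon>/2)))"
      using int_ind[OF Um] by simp
    show "integrable \<mu> (\<lambda>y. \<Sum>i<n. indicator (A i) y :: real)"
      using int_ind[OF Am] by simp
    fix y show "indicator U y * (real n * (1 - \<epsilon>/2)) \<le> (\<Sum>i<n. indicator (A i) y)"
      using pw[of y] by (cases "y \<in> U") (auto intro: sum_nonneg)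
  qed
  also have "\<dots> = (\<Sum>i<n. measure \<mu> (A i))"
    using int_ind[OF Am] Am spX AX by simp
  also have "\<dots> \<le> (\<Sum>i<n. 1 - \<epsilon>)"
    by (rule sum_mono) (use le mA W_def in auto)
  finally have ineq: "measure \<mu> U * (real n * (1 - \<epsilon>/2)) \<le> real n * (1 - \<epsilon>)" by simp
  have Ugt: "measure \<mu> U > 1 - \<epsilon>^2/4" using U unfolding U_def \<delta>_def .
  have pos: "real n * (1 - \<epsilon>/2) > 0" using n ep by simp
  have "(1 - \<epsilon>^2/4) * (real n * (1 - \<epsilon>/2)) < measure \<mu> U * (real n * (1 - \<epsilon>/2))"
    using mult_strict_right_mono[OF Ugt pos] .
  with ineq have "(1 - \<epsilon>^2/4) * (1 - \<epsilon>/2) < 1 - \<epsilon>"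
    using n by (simp add: mult.assoc mult.left_commute[of "real n"])
  moreover have "\<epsilon> * \<epsilon> \<le> \<epsilon>" using ep by (simp add: mult_le_cancel_left1)
  moreover have "\<epsilon> * \<epsilon> * \<epsilon> \<ge> 0" using ep by simp
  ultimately have H: "\<epsilon> * 2 + \<epsilon> * (\<epsilon> * \<epsilon>) / 2 < \<epsilon> * \<epsilon>" "\<epsilon> * \<epsilon> \<le> \<epsilon>"
    by (simp_all add: power2_eq_square algebra_simps)
  moreover have "0 \<le> \<epsilon> * (\<epsilon> * \<epsilon>)" using ep by simp
  ultimately show False using ep by linarith
qed

theorem mainTheorem9:
  fixes X :: "'a::metric_space set" and T :: "'a \<Rightarrow> 'a" and \<mu> :: "'a measure"
  assumes "compact X" and "X \<noteq> {}"
    and "T ` X \<subseteq> X" and "continuous_on X T"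
    and "prob_space \<mu>" and "sets \<mu> = sets (restrict_space borel X)"
    and "T \<in> measurable \<mu> \<mu>" and "distr \<mu> \<mu> T = \<mu>"
  shows "bounded_complexity X \<mu> (dbar T) \<longleftrightarrow> bounded_complexity X \<mu> (dhat T)"
proof -
  interpret P: prob_space \<mu> by (fact assms(5))
  have bar_ne: "\<exists>F. finite F \<and> F \<subseteq> X \<and> measure \<mu> (\<Union>x\<in>F. rball X (dbar T) k x e) > 1 - e"
    if "e > 0" for k e
  proof (rule S_nonempty[OF assms(1,5,6) that])
    fix x assume "x \<in> X" then show "x \<in> rball X (dbar T) k x e"
      using that by (simp add: rball_def dbar_self)
  next
    fix x show "\<exists>V. open V \<and> rball X (dbar T) k x e = X \<inter> V"
      by (rule rball_dbar_open[OF assms(3,4)])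
  qed
  have hat_ne: "\<exists>F. finite F \<and> F \<subseteq> X \<and> measure \<mu> (\<Union>x\<in>F. rball X (dhat T) n x e) > 1 - e"
    if "e > 0" "n \<ge> 1" for n e
  proof (rule S_nonempty[OF assms(1,5,6) that(1)])
    fix x assume x: "x \<in> X"
    have "dhat T n x x = 0" by (rule dhat_self[OF that(2)])
    then show "x \<in> rball X (dhat T) n x e"
      unfolding rball_def using x that(1) by simp
  next
    fix x show "\<exists>V. open V \<and> rball X (dhat T) n x e = X \<inter> V"
      by (rule rball_dhat_open[OF assms(3,4) that(2)])
  qed
  show ?thesis
  proof
    assume bc: "bounded_complexity X \<mu> (dbar T)"
    show "bounded_complexity X \<mu> (dhat T)"
      unfolding bounded_complexity_def
    proof (intro allI impI)
      fix \<epsilon> :: real assume ep: "\<epsilon> > 0"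
      show "\<exists>C>0. \<forall>n\<ge>1. span_mu X \<mu> (dhat T) n \<epsilon> \<le> C"
      proof (cases "\<epsilon> \<le> 1")
        case False
        have "span_mu X \<mu> (dhat T) n \<epsilon> \<le> card ({}::'a set)" for n
          by (rule span_le) (use False in simp_all)
        then show ?thesis by (intro exI[of _ 1]) auto
      next
        case True
        have d: "\<epsilon>^2/4 > 0" using ep by simp
        obtain C where C: "C > 0" "\<And>m. m \<ge> 1 \<Longrightarrow> span_mu X \<mu> (dbar T) m (\<epsilon>^2/4) \<le> C"
          using bc d unfolding bounded_complexity_def by blast
        have "span_mu X \<mu> (dhat T) n \<epsilon> \<le> C" if n: "n \<ge> 1" for n
        proof -
          obtain F where F: "finite F" "F \<subseteq> X"
            "measure \<mu> (\<Union>x\<in>F. rball X (dbar T) (2*n) x (\<epsilon>^2/4)) > 1 - \<epsilon>^2/4"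
            "card F = span_mu X \<mu> (dbar T) (2*n) (\<epsilon>^2/4)"
            using span_mem[OF bar_ne[OF d]] by blast
          obtain i where i: "i < n" "measure \<mu> (\<Union>z\<in>F. rball X (dhat T) n ((T^^i) z) \<epsilon>) > 1 - \<epsilon>"
            using key_lemma[OF assms(3,4,5,6,7,8) n ep True F(1,2,3)] by blast
          have sub: "(T^^i) ` F \<subseteq> X" using funpow_cont[OF assms(3,4), of i] F(2) by auto
          have eqU: "(\<Union>x\<in>(T^^i) ` F. rball X (dhat T) n x \<epsilon>) = (\<Union>z\<in>F. rball X (dhat T) n ((T^^i) z) \<epsilon>)"
            by blast
          have fin: "finite ((T^^i) ` F)" using F(1) by (rule finite_imageI)
          have "span_mu X \<mu> (dhat T) n \<epsilon> \<le> card ((T^^i) ` F)"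
            by (rule span_le[OF fin sub]) (simp only: eqU i(2))
          also have "\<dots> \<le> card F" using F(1) by (rule card_image_le)
          also have "\<dots> \<le> C" using F(4) C(2)[of "2*n"] n by simp
          finally show ?thesis .
        qed
        then show ?thesis using C(1) by blast
      qed
    qed
  next
    assume bc: "bounded_complexity X \<mu> (dhat T)"
    show "bounded_complexity X \<mu> (dbar T)"
      unfolding bounded_complexity_def
    proof (intro allI impI)
      fix \<epsilon> :: real assume ep: "\<epsilon> > 0"
      obtain C where C: "C > 0" "\<And>m. m \<ge> 1 \<Longrightarrow> span_mu X \<mu> (dhat T) m \<epsilon> \<le> C"
        using bc ep unfolding bounded_complexity_def by blast
      have "span_mu X \<mu> (dbar T) n \<epsilon> \<le> C" if n: "n \<ge> 1" for n
      proof -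
        obtain F where F: "finite F" "F \<subseteq> X"
          "measure \<mu> (\<Union>x\<in>F. rball X (dhat T) n x \<epsilon>) > 1 - \<epsilon>"
          "card F = span_mu X \<mu> (dhat T) n \<epsilon>"
          using span_mem[OF hat_ne[OF ep n]] by blast
        have sub: "(\<Union>x\<in>F. rball X (dhat T) n x \<epsilon>) \<subseteq> (\<Union>x\<in>F. rball X (dbar T) n x \<epsilon>)"
        proof
          fix y assume "y \<in> (\<Union>x\<in>F. rball X (dhat T) n x \<epsilon>)"
          then obtain x where x: "x \<in> F" "y \<in> X" "dhat T n x y < \<epsilon>" unfolding rball_def by blast
          have "n \<in> {1..n}" using n by simp
          then have "dbar T n x y < \<epsilon>" using x(3) dhat_lt_iff[OF n] by blast
          then show "y \<in> (\<Union>x\<in>F. rball X (dbar T) n x \<epsilon>)" using x unfolding rball_def by blast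
        qed
        have meas: "(\<Union>x\<in>F. rball X (dbar T) n x \<epsilon>) \<in> sets \<mu>"
          using F(1)
        proof (intro sets.finite_UN)
          fix z
          obtain V where "open V" "rball X (dbar T) n z \<epsilon> = X \<inter> V"
            using rball_dbar_open[OF assms(3,4)] by blast
          then show "rball X (dbar T) n z \<epsilon> \<in> sets \<mu>" using open_in_sets[OF assms(6)] by simp
        qed auto
        have "measure \<mu> (\<Union>x\<in>F. rball X (dbar T) n x \<epsilon>) > 1 - \<epsilon>"
          using P.finite_measure_mono[OF sub meas] F(3) by linarith
        then have "span_mu X \<mu> (dbar T) n \<epsilon> \<le> card F"
          by (rule span_le[OF F(1,2)])
        also have "\<dots> \<le> C" using F(4) C(2)[OF n] by simp
        finally show ?thesis .
      qed
      then show "\<exists>C>0. \<forall>n\<ge>1. span_mu X \<mu> (dbar T) n \<epsilon> \<le> C" using C(1) by blast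
    qed
  qed
qed
end
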